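(* Let $R$ be a von Neumann regular semiartinian ring with primitive factors artinian, of Loewy length $\sigma+1$, with dimension sequence $\{(\lambda_\alpha,\{(n_{\alpha\beta},K_{\alpha\beta})\mid\beta<\lambda_\alpha\})\mid\alpha\le\sigma\}$. Then the following are equivalent: (i) $R$ is commutative; (ii) for all $\alpha\le\sigma$ and $\beta<\lambda_\alpha$, $K_{\alpha\beta}$ is commutative and $n_{\alpha\beta}=1$; (iii) for each $\beta<\lambda_0$, $K_{0\beta}$ is commutative and $n_{0\beta}=1$.
   Context: Socle sequence of $R$: $S_0=0$, $S_{\alpha+1}/S_\alpha=\mathrm{Soc}(R/S_\alpha)$, unions at limits; semiartinian of Loewy length $\sigma+1$ means $S_{\sigma+1}=R$. Primitive factors artinian: $R/P$ artinian for each primitive ideal $P$. For such rings, for each $\alpha\le\sigma$ the layer $S_{\alpha+1}/S_\alpha$ is isomorphic as a ring without unit to $\bigoplus_{\beta<\lambda_\alpha}M_{n_{\alpha\beta}}(K_{\alpha\beta})$, where $\lambda_\alpha>0$ is the number of homogeneous components of the layer, $n_{\alpha\beta}$ positive integers and $K_{\alpha\beta}$ skew-fields (with $K_{\alpha\beta}$ the endomorphism ring of the simple module whose isotypic component is the $\beta$-th homogeneous component); these data form the dimension sequence of $R$. *)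

theory Defs
  imports Main
begin

text \<open>Modules are right R-modules; subquotients J/I of R (I a two-sided ideal, J a right
  ideal containing I) are represented by the pair of sets I, J, and maps between them
  by functions on representatives, all congruences being taken modulo I.\<close>

definition right_ideal :: "'a::ring_1 set \<Rightarrow> bool" where
  "right_ideal J \<longleftrightarrow> 0 \<in> J \<and> (\<forall>x\<in>J. \<forall>y\<in>J. x + y \<in> J) \<and> (\<forall>x\<in>J. - x \<in> J)
     \<and> (\<forall>x\<in>J. \<forall>r. x * r \<in> J)"

definition gen_right_ideal :: "'a::ring_1 set \<Rightarrow> 'a set" where
  "gen_right_ideal X = \<Inter>{K. right_ideal K \<and> X \<subseteq> K}"

text \<open>J/I is a simple right module (J a minimal right ideal over I)\<close>
definition minimal_over :: "'a::ring_1 set \<Rightarrow> 'a set \<Rightarrow> bool" where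
  "minimal_over I J \<longleftrightarrow> right_ideal J \<and> I \<subset> J \<and>
     (\<forall>J'. right_ideal J' \<and> I \<subset> J' \<and> J' \<subseteq> J \<longrightarrow> J' = J)"

text \<open>preimage in R of the socle of the right module R/I\<close>
definition soc_succ :: "'a::ring_1 set \<Rightarrow> 'a set" where
  "soc_succ I = gen_right_ideal (I \<union> \<Union>{J. minimal_over I J})"

text \<open>The set of all terms S_alpha of the socle sequence: S_0 = 0, successor steps,
  unions at limits (= unions of nonempty chains of earlier terms).\<close>
inductive_set socle_seq :: "'a::ring_1 set set" where
  zero: "{0} \<in> socle_seq"
| succ: "I \<in> socle_seq \<Longrightarrow> soc_succ I \<in> socle_seq"
| union: "(\<And>I. I \<in> C \<Longrightarrow> I \<in> socle_seq) \<Longrightarrow> C \<noteq> {} \<Longrightarrow> Complete_Partial_Order.chain (\<subseteq>) C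
          \<Longrightarrow> \<Union>C \<in> socle_seq"

definition semiartinian :: "'a::ring_1 itself \<Rightarrow> bool" where
  "semiartinian _ \<longleftrightarrow> (UNIV :: 'a set) \<in> socle_seq"

definition vN_regular :: "'a::ring_1 itself \<Rightarrow> bool" where
  "vN_regular _ \<longleftrightarrow> (\<forall>a::'a. \<exists>x. a * x * a = a)"

definition maximal_right_ideal :: "'a::ring_1 set \<Rightarrow> bool" where
  "maximal_right_ideal M \<longleftrightarrow> right_ideal M \<and> M \<noteq> UNIV \<and>
     (\<forall>N. right_ideal N \<and> M \<subseteq> N \<longrightarrow> N = M \<or> N = UNIV)"

definition primitive_ideal :: "'a::ring_1 set \<Rightarrow> bool" where
  "primitive_ideal P \<longleftrightarrow> (\<exists>M. maximal_right_ideal M \<and> P = {r. \<forall>x. x * r \<in> M})"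

text \<open>R/P is (right) artinian: DCC on right ideals containing P\<close>
definition artinian_quot :: "'a::ring_1 set \<Rightarrow> bool" where
  "artinian_quot P \<longleftrightarrow>
     wf {(A, B). right_ideal A \<and> right_ideal B \<and> P \<subseteq> A \<and> A \<subset> B}"

definition primitive_factors_artinian :: "'a::ring_1 itself \<Rightarrow> bool" where
  "primitive_factors_artinian _ \<longleftrightarrow>
     (\<forall>P::'a set. primitive_ideal P \<longrightarrow> artinian_quot P)"

text \<open>f represents an R-homomorphism J/I \<rightarrow> J'/I\<close>
definition rmod_hom :: "'a::ring_1 set \<Rightarrow> 'a set \<Rightarrow> 'a set \<Rightarrow> ('a \<Rightarrow> 'a) \<Rightarrow> bool" where
  "rmod_hom I J J' f \<longleftrightarrow> (\<forall>x\<in>J. f x \<in> J') \<and> (\<forall>x\<in>I. f x \<in> I) \<and>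
     (\<forall>x\<in>J. \<forall>y\<in>J. f (x + y) - (f x + f y) \<in> I) \<and>
     (\<forall>x\<in>J. \<forall>r. f (x * r) - f x * r \<in> I)"

definition rmod_iso :: "'a::ring_1 set \<Rightarrow> 'a set \<Rightarrow> 'a set \<Rightarrow> ('a \<Rightarrow> 'a) \<Rightarrow> bool" where
  "rmod_iso I J J' f \<longleftrightarrow> rmod_hom I J J' f \<and> (\<forall>x\<in>J. f x \<in> I \<longrightarrow> x \<in> I) \<and>
     (\<forall>y\<in>J'. \<exists>x\<in>J. y - f x \<in> I)"

text \<open>K = End_R(J/I) is commutative\<close>
definition end_commutative :: "'a::ring_1 set \<Rightarrow> 'a set \<Rightarrow> bool" where
  "end_commutative I J \<longleftrightarrow> (\<forall>f g. rmod_hom I J J f \<longrightarrow> rmod_hom I J J g \<longrightarrow>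
     (\<forall>x\<in>J. f (g x) - g (f x) \<in> I))"

text \<open>preimage of the homogeneous (isotypic) component of Soc(R/I) of the simple module J/I\<close>
definition homog_comp :: "'a::ring_1 set \<Rightarrow> 'a set \<Rightarrow> 'a set" where
  "homog_comp I J = gen_right_ideal (I \<union> \<Union>{J'. minimal_over I J' \<and> (\<exists>f. rmod_iso I J J' f)})"

text \<open>H/I is a direct sum of n simple modules\<close>
definition decomp_length :: "'a::ring_1 set \<Rightarrow> 'a set \<Rightarrow> nat \<Rightarrow> bool" where
  "decomp_length I H n \<longleftrightarrow> (\<exists>F. finite F \<and> card F = n \<and> (\<forall>J\<in>F. minimal_over I J) \<and>
     gen_right_ideal (I \<union> \<Union>F) = H \<and>
     (\<forall>J\<in>F. J \<inter> gen_right_ideal (I \<union> \<Union>(F - {J})) = I))"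

text \<open>n_{alpha beta}: the homogeneous component of J/I is isomorphic to M_n(K), whose
  length as a right module is n, i.e. it is the direct sum of n copies of J/I\<close>
definition dim_n :: "'a::ring_1 set \<Rightarrow> 'a set \<Rightarrow> nat" where
  "dim_n I J = (THE n. decomp_length I (homog_comp I J) n)"

text \<open>condition on the dimension data of the layer S_{alpha+1}/S_alpha, where I = S_alpha;
  beta ranges over homogeneous components, each represented by a simple J/I\<close>
definition layer_cond :: "'a::ring_1 set \<Rightarrow> bool" where
  "layer_cond I \<longleftrightarrow> (\<forall>J. minimal_over I J \<longrightarrow> end_commutative I J \<and> dim_n I J = 1)"

end

theory Submission
  imports Defs
begin


definition ssum :: "'a::ring_1 set \<Rightarrow> 'a set \<Rightarrow> 'a set" where
  "ssum A B = {a + b | a b. a \<in> A \<and> b \<in> B}"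

lemma riD:
  assumes "right_ideal J"
  shows ri_0: "0 \<in> J" and ri_add: "x \<in> J \<Longrightarrow> y \<in> J \<Longrightarrow> x + y \<in> J"
    and ri_neg: "x \<in> J \<Longrightarrow> - x \<in> J" and ri_mult: "x \<in> J \<Longrightarrow> x * r \<in> J"
  using assms unfolding right_ideal_def by auto

lemma ri_diff: "right_ideal J \<Longrightarrow> x \<in> J \<Longrightarrow> y \<in> J \<Longrightarrow> x - y \<in> J"
  by (metis ri_add ri_neg diff_conv_add_uminus)

lemma ri_diff_iff: "right_ideal J \<Longrightarrow> y \<in> J \<Longrightarrow> (x - y \<in> J) = (x \<in> J)"
  by (metis diff_add_cancel ri_add ri_diff)

lemma ri_add_iff: "right_ideal J \<Longrightarrow> y \<in> J \<Longrightarrow> (x + y \<in> J) = (x \<in> J)"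
  by (metis add_diff_cancel ri_add ri_diff)

lemma riI:
  assumes "0 \<in> J" "\<And>x y. x \<in> J \<Longrightarrow> y \<in> J \<Longrightarrow> x + y \<in> J"
    "\<And>x. x \<in> J \<Longrightarrow> - x \<in> J" "\<And>x r. x \<in> J \<Longrightarrow> x * r \<in> J"
  shows "right_ideal J"
  using assms unfolding right_ideal_def by auto

lemma ri_UNIV: "right_ideal (UNIV::'a::ring_1 set)" by (rule riI) auto
lemma ri_zero: "right_ideal ({0}::'a::ring_1 set)" by (rule riI) auto

lemma ri_Int: "right_ideal A \<Longrightarrow> right_ideal B \<Longrightarrow> right_ideal (A \<inter> B)"
  unfolding right_ideal_def by auto

lemma gen_ri: "right_ideal (gen_right_ideal X)"
  unfolding gen_right_ideal_def right_ideal_def by auto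

lemma gen_sup: "X \<subseteq> gen_right_ideal X"
  unfolding gen_right_ideal_def by auto

lemma gen_least: "right_ideal K \<Longrightarrow> X \<subseteq> K \<Longrightarrow> gen_right_ideal X \<subseteq> K"
  unfolding gen_right_ideal_def by auto

lemma gen_mono: "X \<subseteq> Y \<Longrightarrow> gen_right_ideal X \<subseteq> gen_right_ideal Y"
  by (meson gen_least gen_ri gen_sup order_trans)

lemma gen_id: "right_ideal K \<Longrightarrow> gen_right_ideal K = K"
  by (simp add: gen_least gen_sup subset_antisym)

lemma gen_empty: "gen_right_ideal {} = ({0}::'a::ring_1 set)"
  by (metis empty_subsetI gen_least gen_ri ri_0 ri_zero singletonD subsetI subset_antisym)

lemma gen_absorb: "gen_right_ideal (gen_right_ideal X \<union> Y) = gen_right_ideal (X \<union> Y)"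
proof
  show "gen_right_ideal (gen_right_ideal X \<union> Y) \<subseteq> gen_right_ideal (X \<union> Y)"
    by (meson Un_least Un_upper1 Un_upper2 gen_least gen_mono gen_ri gen_sup order_trans)
  show "gen_right_ideal (X \<union> Y) \<subseteq> gen_right_ideal (gen_right_ideal X \<union> Y)"
    by (meson Un_mono gen_mono gen_sup order_refl)
qed

lemma ssum_ri: "right_ideal A \<Longrightarrow> right_ideal B \<Longrightarrow> right_ideal (ssum A B)"
proof (rule riI)
  assume A: "right_ideal A" and B: "right_ideal B"
  show "0 \<in> ssum A B" unfolding ssum_def using ri_0[OF A] ri_0[OF B] by force
  fix x y assume "x \<in> ssum A B" "y \<in> ssum A B"
  then obtain a b a' b' where "x = a + b" "y = a' + b'" "a \<in> A" "b \<in> B" "a' \<in> A" "b' \<in> B"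
    unfolding ssum_def by auto
  then show "x + y \<in> ssum A B" unfolding ssum_def
    by (intro CollectI exI[of _ "a + a'"] exI[of _ "b + b'"]) (auto simp: algebra_simps ri_add A B)
next
  fix x assume A: "right_ideal A" and B: "right_ideal B" and "x \<in> ssum A B"
  then obtain a b where "x = a + b" "a \<in> A" "b \<in> B" unfolding ssum_def by auto
  then show "- x \<in> ssum A B" unfolding ssum_def
    by (intro CollectI exI[of _ "- a"] exI[of _ "- b"]) (auto simp: ri_neg A B)
next
  fix x r assume A: "right_ideal A" and B: "right_ideal B" and "x \<in> ssum A B"
  then obtain a b where "x = a + b" "a \<in> A" "b \<in> B" unfolding ssum_def by auto
  then show "x * r \<in> ssum A B" unfolding ssum_def
    by (intro CollectI exI[of _ "a * r"] exI[of _ "b * r"]) (auto simp: ri_mult A B distrib_right)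
qed

lemma ssum_sup1: "right_ideal B \<Longrightarrow> A \<subseteq> ssum A B"
  unfolding ssum_def by (force dest: ri_0)
lemma ssum_sup2: "right_ideal A \<Longrightarrow> B \<subseteq> ssum A B"
  unfolding ssum_def by (force dest: ri_0)
lemma ssum_least: "right_ideal C \<Longrightarrow> A \<subseteq> C \<Longrightarrow> B \<subseteq> C \<Longrightarrow> ssum A B \<subseteq> C"
  unfolding ssum_def by (auto intro: ri_add)

lemma gen_Un: "right_ideal A \<Longrightarrow> right_ideal B \<Longrightarrow> gen_right_ideal (A \<union> B) = ssum A B"
  by (meson Un_least gen_least gen_ri gen_sup le_sup_iff ssum_least ssum_ri ssum_sup1 ssum_sup2 subset_antisym)

lemma ssum_comm: "ssum A B = ssum B A"
  unfolding ssum_def by (auto, metis add.commute, metis add.commute)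

lemma ssum_eq_left: "right_ideal A \<Longrightarrow> right_ideal B \<Longrightarrow> B \<subseteq> A \<Longrightarrow> ssum A B = A"
  by (meson order_refl ssum_least ssum_sup1 subset_antisym)

lemma modular: "right_ideal A \<Longrightarrow> right_ideal C \<Longrightarrow> A \<subseteq> C \<Longrightarrow> C \<inter> ssum A B = ssum A (C \<inter> B)"
  unfolding ssum_def
proof safe
  fix a b assume "right_ideal A" "right_ideal C" "A \<subseteq> C" "a + b \<in> C" "a \<in> A" "b \<in> B"
  then have "b \<in> C" by (metis add_diff_cancel_left' in_mono ri_diff)
  then show "\<exists>a' b'. a + b = a' + b' \<and> a' \<in> A \<and> b' \<in> C \<inter> B" using \<open>a\<in>A\<close> \<open>b\<in>B\<close> by blast
next
  fix a b assume "right_ideal A" "right_ideal C" "A \<subseteq> C" "a \<in> A" "b \<in> C" 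
  then show "a + b \<in> C" by (meson in_mono ri_add)
qed blast

lemma gen_insert: "right_ideal I \<Longrightarrow> right_ideal K \<Longrightarrow>
   gen_right_ideal (I \<union> \<Union>(insert K F)) = ssum (gen_right_ideal (I \<union> \<Union>F)) K"
proof -
  assume "right_ideal I" "right_ideal K"
  have "gen_right_ideal (I \<union> \<Union>(insert K F)) = gen_right_ideal ((I \<union> \<Union>F) \<union> K)"
    by (simp add: Un_ac)
  also have "\<dots> = gen_right_ideal (gen_right_ideal (I \<union> \<Union>F) \<union> K)" by (simp add: gen_absorb)
  also have "\<dots> = ssum (gen_right_ideal (I \<union> \<Union>F)) K"
    using gen_Un[OF gen_ri \<open>right_ideal K\<close>] .
  finally show ?thesis .
qed

lemma gen_I: "right_ideal I \<Longrightarrow> I \<subseteq> gen_right_ideal (I \<union> X)"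
  by (meson gen_sup le_sup_iff)


lemma chain_mono:
  assumes "\<forall>i<m. c i \<subseteq> c (Suc i)" "i \<le> j" "j \<le> m"
  shows "c i \<subseteq> c j"
  using assms(2,3)
proof (induction j)
  case 0 then show ?case by simp
next
  case (Suc j)
  show ?case
  proof (cases "i = Suc j")
    case True then show ?thesis by simp
  next
    case False
    then have "i \<le> j" using Suc.prems by simp
    then show ?thesis using Suc assms(1) by (meson Suc_le_lessD order_trans Suc_leD)
  qed
qed

lemma between_cases:
  assumes I: "right_ideal I" and K: "minimal_over I K" and H': "right_ideal H'" "I \<subseteq> H'"
    and L: "right_ideal L" "H' \<subseteq> L" "L \<subseteq> ssum H' K"
  shows "L = H' \<or> L = ssum H' K"
proof -
  have Kr: "right_ideal K" and IK: "I \<subset> K" using K unfolding minimal_over_def by auto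
  have "right_ideal (L \<inter> K)" using L Kr ri_Int by blast
  moreover have "I \<subseteq> L \<inter> K" using IK H' L by auto
  ultimately have "L \<inter> K = I \<or> L \<inter> K = K"
    using K unfolding minimal_over_def by (metis inf_le2 psubsetI)
  then show ?thesis
  proof
    assume "L \<inter> K = K"
    then have "ssum H' K \<subseteq> L" using ssum_least L by blast
    then show ?thesis using L by blast
  next
    assume a: "L \<inter> K = I"
    have "L = L \<inter> ssum H' K" using L by blast
    also have "\<dots> = ssum H' (L \<inter> K)" using modular H' L by blast
    also have "\<dots> = H'" using a ssum_eq_left H' I by metis
    finally show ?thesis by blast
  qed
qed

lemma step_lemma:
  assumes "right_ideal A" "right_ideal B" "right_ideal H'" "A \<subseteq> B"
    "A \<inter> H' = B \<inter> H'" "ssum A H' = ssum B H'"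
  shows "A = B"
proof -
  { fix x assume x: "x \<in> B"
    then have "x \<in> ssum A H'" using assms ssum_sup1 by blast
    then obtain a h where "x = a + h" "a \<in> A" "h \<in> H'" unfolding ssum_def by auto
    then have "h \<in> B" using x assms by (metis add_diff_cancel_left' in_mono ri_diff)
    then have "h \<in> A" using assms \<open>h\<in>H'\<close> by blast
    then have "x \<in> A" using \<open>x = a + h\<close> \<open>a\<in>A\<close> assms ri_add by blast }
  then show ?thesis using assms by blast
qed

lemma chain_bound:
  assumes "finite F" "right_ideal I" "\<forall>K\<in>F. minimal_over I K"
    and "\<forall>i\<le>m. right_ideal (c i) \<and> I \<subseteq> c i \<and> c i \<subseteq> gen_right_ideal (I \<union> \<Union>F)"
    and "\<forall>i<m. c i \<subseteq> c (Suc i)"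
  shows "card {i. i<m \<and> c i \<noteq> c (Suc i)} \<le> card F"
  using assms(1,3,4,5)
proof (induction F arbitrary: c rule: finite_induct)
  case empty
  have "gen_right_ideal (I \<union> \<Union>{}) = I" using gen_id assms(2) by simp
  then have "\<forall>i\<le>m. c i = I" using empty by auto
  then have "{i. i<m \<and> c i \<noteq> c (Suc i)} = {}" by auto
  then show ?case by simp
next
  case (insert K F c)
  define H' where "H' = gen_right_ideal (I \<union> \<Union>F)"
  have Kmin: "minimal_over I K" using insert by auto
  have Kr: "right_ideal K" using Kmin unfolding minimal_over_def by auto
  have H'r: "right_ideal H'" unfolding H'_def by (rule gen_ri)
  have IH': "I \<subseteq> H'" unfolding H'_def using gen_I assms(2) by blast
  have Heq: "gen_right_ideal (I \<union> \<Union>(insert K F)) = ssum H' K"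
    unfolding H'_def using gen_insert assms(2) Kr by blast
  define H where "H = ssum H' K"
  have Hr: "right_ideal H" unfolding H_def using ssum_ri H'r Kr by blast
  have H'H: "H' \<subseteq> H" unfolding H_def using ssum_sup1 Kr by blast
  have cr: "\<forall>i\<le>m. right_ideal (c i) \<and> I \<subseteq> c i \<and> c i \<subseteq> H" using insert.prems Heq H_def by simp
  define d where "d i = c i \<inter> H'" for i
  define e where "e i = ssum (c i) H'" for i
  define Sc where "Sc = {i. i<m \<and> c i \<noteq> c (Suc i)}"
  define Sd where "Sd = {i. i<m \<and> d i \<noteq> d (Suc i)}"
  define Se where "Se = {i. i<m \<and> e i \<noteq> e (Suc i)}"
  have "card Sd \<le> card F"
    unfolding Sd_def
  proof (rule insert.IH)
    show "\<forall>K\<in>F. minimal_over I K" using insert by auto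
    show "\<forall>i\<le>m. right_ideal (d i) \<and> I \<subseteq> d i \<and> d i \<subseteq> gen_right_ideal (I \<union> \<Union> F)"
      unfolding d_def using cr IH' H'r ri_Int[of "c _" H'] H'_def by auto
    show "\<forall>i<m. d i \<subseteq> d (Suc i)" unfolding d_def using insert.prems by auto
  qed
  have emono: "e i \<subseteq> e j" if "i \<le> j" "j \<le> m" for i j
    unfolding e_def ssum_def using chain_mono[OF insert.prems(3) that] by blast
  have ecases: "e i = H' \<or> e i = H" if "i \<le> m" for i
    unfolding H_def
  proof (rule between_cases[OF assms(2) Kmin H'r IH'])
    show "right_ideal (e i)" unfolding e_def using ssum_ri cr that H'r by blast
    show "H' \<subseteq> e i" unfolding e_def using ssum_sup2 cr that by blast
    show "e i \<subseteq> ssum H' K" unfolding e_def using ssum_least[OF Hr] cr that H'H H_def by blast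
  qed
  have "card Se \<le> 1"
  proof -
    have "i = j" if "i \<in> Se" "j \<in> Se" for i j
    proof (rule ccontr)
      assume ne: "i \<noteq> j"
      have key: "e a = H' \<and> e (Suc a) = H" if "a \<in> Se" for a
      proof -
        have a: "a < m" "e a \<noteq> e (Suc a)" using that Se_def by auto
        have "e a \<subseteq> e (Suc a)" using emono a by simp
        moreover have "e (Suc a) \<subseteq> H" using ecases[of "Suc a"] a H'H by auto
        ultimately show ?thesis using ecases[of a] ecases[of "Suc a"] a by auto
      qed
      have "\<exists>a b. a \<in> Se \<and> b \<in> Se \<and> a < b" using ne that by (metis linorder_neqE_nat)
      then obtain a b where ab: "a \<in> Se" "b \<in> Se" "a < b" by blast
      have "e (Suc a) \<subseteq> e b" using emono ab Se_def by auto
      then have "H \<subseteq> H'" using key ab by auto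
      then have "H = H'" using H'H by auto
      then show False using key[OF ab(2)] Se_def ab by auto
    qed
    moreover have "finite Se" unfolding Se_def by simp
    ultimately show ?thesis by (simp add: card_le_Suc0_iff_eq)
  qed
  have "Sc \<subseteq> Sd \<union> Se"
  proof
    fix i assume "i \<in> Sc"
    then have i: "i < m" "c i \<noteq> c (Suc i)" unfolding Sc_def by auto
    show "i \<in> Sd \<union> Se"
    proof (rule ccontr)
      assume "i \<notin> Sd \<union> Se"
      then have "d i = d (Suc i)" "e i = e (Suc i)" using i Sd_def Se_def by auto
      then have "c i = c (Suc i)"
        using step_lemma[of "c i" "c (Suc i)" H'] cr i H'r insert.prems(3) d_def e_def by auto
      then show False using i by simp
    qed
  qed
  then have "card Sc \<le> card (Sd \<union> Se)" by (intro card_mono) (auto simp: Sd_def Se_def)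
  also have "\<dots> \<le> card Sd + card Se" by (rule card_Un_le)
  also have "\<dots> \<le> card (insert K F)" using \<open>card Sd \<le> card F\<close> \<open>card Se \<le> 1\<close> insert by simp
  finally show ?case unfolding Sc_def .
qed


lemma gen_member: "K \<in> F \<Longrightarrow> K \<subseteq> gen_right_ideal (I \<union> \<Union>F)"
  using gen_sup[of "I \<union> \<Union>F"] by blast

lemma decomp_le:
  assumes I: "right_ideal I" and D: "decomp_length I H n"
    and G: "finite G" "\<forall>K\<in>G. minimal_over I K" "gen_right_ideal (I \<union> \<Union>G) = H"
  shows "n \<le> card G"
proof -
  obtain F where F: "finite F" "card F = n" "\<forall>J\<in>F. minimal_over I J"
    "gen_right_ideal (I \<union> \<Union>F) = H" "\<forall>J\<in>F. J \<inter> gen_right_ideal (I \<union> \<Union>(F - {J})) = I"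
    using D unfolding decomp_length_def by blast
  obtain f where f: "bij_betw f {0..<n} F" using ex_bij_betw_nat_finite[OF F(1)] F(2) by blast
  define c where "c i = gen_right_ideal (I \<union> \<Union>(f ` {..<i}))" for i
  have fF: "f i \<in> F" if "i < n" for i using f that by (auto simp: bij_betw_def)
  have img: "f ` {..<i} \<subseteq> F" if "i \<le> n" for i using fF that by auto
  have "card {i. i<n \<and> c i \<noteq> c (Suc i)} \<le> card G"
  proof (rule chain_bound[OF G(1) I G(2)])
    show "\<forall>i\<le>n. right_ideal (c i) \<and> I \<subseteq> c i \<and> c i \<subseteq> gen_right_ideal (I \<union> \<Union> G)"
    proof (intro allI impI conjI)
      fix i assume i: "i \<le> n"
      show "right_ideal (c i)" unfolding c_def by (rule gen_ri)
      show "I \<subseteq> c i" unfolding c_def by (rule gen_I[OF I])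
      have "\<Union>(f ` {..<i}) \<subseteq> \<Union>F" using img[OF i] by blast
      then show "c i \<subseteq> gen_right_ideal (I \<union> \<Union> G)" unfolding c_def G(3) F(4)[symmetric]
        by (intro gen_mono) blast
    qed
    show "\<forall>i<n. c i \<subseteq> c (Suc i)" unfolding c_def
      by (intro allI impI gen_mono) (auto simp: lessThan_Suc)
  qed
  moreover have "{i. i<n \<and> c i \<noteq> c (Suc i)} = {..<n}"
  proof -
    have "c i \<noteq> c (Suc i)" if i: "i < n" for i
    proof
      assume eq: "c i = c (Suc i)"
      have "f i \<subseteq> c (Suc i)" unfolding c_def using gen_sup by (fastforce simp: lessThan_Suc)
      moreover have "f j \<noteq> f i" if "j < i" for j
        using inj_onD[OF bij_betw_imp_inj_on[OF f], of j i] i that by auto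
      then have "f ` {..<i} \<subseteq> F - {f i}"
        using i img[of i] by auto
      then have "c i \<subseteq> gen_right_ideal (I \<union> \<Union>(F - {f i}))" unfolding c_def
        by (intro gen_mono) auto
      ultimately have "f i \<subseteq> I" using F(5) fF[OF i] eq by blast
      moreover have "I \<subset> f i" using F(3) fF[OF i] unfolding minimal_over_def by blast
      ultimately show False by blast
    qed
    then show ?thesis by auto
  qed
  ultimately show ?thesis by simp
qed

lemma dim_n_eq:
  assumes I: "right_ideal I" and D: "decomp_length I (homog_comp I J) n"
  shows "dim_n I J = n"
proof -
  have le: "a \<le> b" if Da: "decomp_length I (homog_comp I J) a" and Db: "decomp_length I (homog_comp I J) b" for a b
  proof -
    obtain G where "finite G" "card G = b" "\<forall>J\<in>G. minimal_over I J" "gen_right_ideal (I \<union> \<Union>G) = homog_comp I J"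
      using Db unfolding decomp_length_def by blast
    then show ?thesis using decomp_le[OF I Da] by blast
  qed
  show ?thesis unfolding dim_n_def
    by (rule the_equality[where P="\<lambda>m. decomp_length I (homog_comp I J) m", OF D]) (use le[OF D] le[OF _ D] in \<open>simp add: antisym\<close>)
qed

lemma contains_minimal:
  assumes I: "right_ideal I" and G: "finite G" "\<forall>K\<in>G. minimal_over I K"
    and U: "right_ideal U" "I \<subset> U" "U \<subseteq> gen_right_ideal (I \<union> \<Union>G)"
  shows "\<exists>K. minimal_over I K \<and> K \<subseteq> U"
proof (rule ccontr)
  assume no: "\<not> ?thesis"
  have claim: "right_ideal Y \<Longrightarrow> I \<subset> Y \<Longrightarrow> Y \<subseteq> U \<Longrightarrow>
     (\<exists>c. (\<forall>i\<le>k. right_ideal (c i) \<and> I \<subseteq> c i \<and> c i \<subseteq> Y) \<and> (\<forall>i<k. c i \<subset> c (Suc i)))" for k Y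
  proof (induction k arbitrary: Y)
    case 0
    then have "right_ideal Y" "I \<subseteq> Y" by auto
    then show ?case by (intro exI[of _ "\<lambda>_. Y"]) simp
  next
    case (Suc k)
    have "\<not> minimal_over I Y" using no Suc.prems by blast
    then obtain Y' where Y': "right_ideal Y'" "I \<subset> Y'" "Y' \<subseteq> Y" "Y' \<noteq> Y"
      using Suc.prems unfolding minimal_over_def by blast
    have "Y' \<subseteq> U" using Y' Suc.prems by blast
    from Suc.IH[OF Y'(1,2) this] obtain c where c: "\<forall>i\<le>k. right_ideal (c i) \<and> I \<subseteq> c i \<and> c i \<subseteq> Y'"
      "\<forall>i<k. c i \<subset> c (Suc i)" by blast
    define c' where "c' = c(Suc k := Y)"
    have "\<forall>i\<le>Suc k. right_ideal (c' i) \<and> I \<subseteq> c' i \<and> c' i \<subseteq> Y"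
    proof (intro allI impI)
      fix i assume "i \<le> Suc k"
      then consider "i = Suc k" | "i \<le> k" by linarith
      then show "right_ideal (c' i) \<and> I \<subseteq> c' i \<and> c' i \<subseteq> Y"
      proof cases
        case 1 then show ?thesis unfolding c'_def using Suc.prems by auto
      next
        case 2 then have "c' i = c i" unfolding c'_def by simp
        moreover have "right_ideal (c i) \<and> I \<subseteq> c i \<and> c i \<subseteq> Y'" using c(1) 2 by blast
        ultimately show ?thesis using Y'(3) by auto
      qed
    qed
    moreover have "\<forall>i<Suc k. c' i \<subset> c' (Suc i)"
    proof (intro allI impI)
      fix i assume "i < Suc k"
      then consider "i = k" | "i < k" by linarith
      then show "c' i \<subset> c' (Suc i)"
      proof cases
        case 1 then have "c' i = c k" "c' (Suc i) = Y" unfolding c'_def by auto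
        moreover have "c k \<subseteq> Y'" using c(1) by blast
        ultimately show ?thesis using Y'(3,4) by auto
      next
        case 2 then have "c' i = c i" "c' (Suc i) = c (Suc i)" unfolding c'_def by auto
        then show ?thesis using c(2) 2 by auto
      qed
    qed
    ultimately show ?case by blast
  qed
  obtain c where c: "\<forall>i\<le>Suc (card G). right_ideal (c i) \<and> I \<subseteq> c i \<and> c i \<subseteq> U"
    "\<forall>i<Suc (card G). c i \<subset> c (Suc i)" using claim[OF U(1,2) order_refl, of "Suc (card G)"] by blast
  have c2: "\<forall>i\<le>Suc (card G). right_ideal (c i) \<and> I \<subseteq> c i \<and> c i \<subseteq> gen_right_ideal (I \<union> \<Union>G)"
    using c(1) U(3) by blast
  have c3: "\<forall>i<Suc (card G). c i \<subseteq> c (Suc i)" using c(2) by blast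
  have "card {i. i<Suc (card G) \<and> c i \<noteq> c (Suc i)} \<le> card G"
    by (rule chain_bound[OF G(1) I G(2) c2 c3])
  moreover have "{i. i<Suc (card G) \<and> c i \<noteq> c (Suc i)} = {..<Suc (card G)}" using c(2) by auto
  ultimately show False by simp
qed

lemma finite_support:
  assumes I: "right_ideal I" and x: "x \<in> gen_right_ideal (I \<union> \<Union>A)"
  shows "\<exists>G. finite G \<and> G \<subseteq> A \<and> x \<in> gen_right_ideal (I \<union> \<Union>G)"
proof -
  define U where "U = {y. \<exists>G. finite G \<and> G \<subseteq> A \<and> y \<in> gen_right_ideal (I \<union> \<Union>G)}"
  have "right_ideal U"
  proof (rule riI)
    have "0 \<in> gen_right_ideal (I \<union> \<Union>{})" by (rule ri_0[OF gen_ri])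
    then show "0 \<in> U" unfolding U_def by (intro CollectI exI[of _ "{}"]) simp
  next
    fix y z assume "y \<in> U" "z \<in> U"
    then obtain G1 G2 where "finite G1" "G1 \<subseteq> A" "y \<in> gen_right_ideal (I \<union> \<Union>G1)"
      "finite G2" "G2 \<subseteq> A" "z \<in> gen_right_ideal (I \<union> \<Union>G2)" unfolding U_def by blast
    moreover have "gen_right_ideal (I \<union> \<Union>G1) \<subseteq> gen_right_ideal (I \<union> \<Union>(G1 \<union> G2))"
      "gen_right_ideal (I \<union> \<Union>G2) \<subseteq> gen_right_ideal (I \<union> \<Union>(G1 \<union> G2))"
      by (auto intro!: gen_mono)
    ultimately have "y + z \<in> gen_right_ideal (I \<union> \<Union>(G1 \<union> G2))"
      using ri_add[OF gen_ri] by blast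
    moreover have "finite (G1 \<union> G2)" "G1 \<union> G2 \<subseteq> A" using \<open>finite G1\<close> \<open>finite G2\<close> \<open>G1 \<subseteq> A\<close> \<open>G2 \<subseteq> A\<close> by auto
    ultimately show "y + z \<in> U" unfolding U_def by blast
  next
    fix y assume "y \<in> U" then show "- y \<in> U" unfolding U_def using ri_neg[OF gen_ri] by blast
  next
    fix y r assume "y \<in> U" then show "y * r \<in> U" unfolding U_def using ri_mult[OF gen_ri] by blast
  qed
  moreover have "I \<union> \<Union>A \<subseteq> U"
  proof
    fix y assume "y \<in> I \<union> \<Union>A"
    then show "y \<in> U"
    proof
      assume "y \<in> I" then have "y \<in> gen_right_ideal (I \<union> \<Union>{})" using gen_sup by blast
      then show ?thesis unfolding U_def by (intro CollectI exI[of _ "{}"]) simp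
    next
      assume "y \<in> \<Union>A" then obtain K where "K \<in> A" "y \<in> K" by (rule UnionE)
      then have "y \<in> gen_right_ideal (I \<union> \<Union>{K})" using gen_sup[of "I \<union> \<Union>{K}"] by auto
      then show ?thesis unfolding U_def using \<open>K \<in> A\<close> by (intro CollectI exI[of _ "{K}"]) simp
    qed
  qed
  ultimately have "gen_right_ideal (I \<union> \<Union>A) \<subseteq> U" by (rule gen_least)
  then show ?thesis using x unfolding U_def by blast
qed

lemma extract_indep:
  assumes I: "right_ideal I" and F: "finite F" "\<forall>K\<in>F. minimal_over I K"
  shows "\<exists>F'\<subseteq>F. gen_right_ideal (I \<union> \<Union>F') = gen_right_ideal (I \<union> \<Union>F) \<and>
           (\<forall>K\<in>F'. K \<inter> gen_right_ideal (I \<union> \<Union>(F' - {K})) = I)"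
  using F
proof (induction F rule: finite_induct)
  case empty then show ?case by auto
next
  case (insert K F)
  obtain F' where F': "F' \<subseteq> F" "gen_right_ideal (I \<union> \<Union>F') = gen_right_ideal (I \<union> \<Union>F)"
    "\<forall>K\<in>F'. K \<inter> gen_right_ideal (I \<union> \<Union>(F' - {K})) = I" using insert by auto
  define S' where "S' = gen_right_ideal (I \<union> \<Union>F')"
  have Kmin: "minimal_over I K" using insert by auto
  then have Kr: "right_ideal K" and IK: "I \<subset> K" unfolding minimal_over_def by auto
  have S'r: "right_ideal S'" unfolding S'_def by (rule gen_ri)
  have IS': "I \<subseteq> S'" unfolding S'_def using gen_I[OF I] by blast
  have span: "gen_right_ideal (I \<union> \<Union>(insert K F)) = ssum S' K"
    using gen_insert[OF I Kr, of F] F'(2) S'_def by simp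
  show ?case
  proof (cases "K \<subseteq> S'")
    case True
    then have "ssum S' K = S'" using ssum_eq_left S'r Kr by blast
    then show ?thesis using F' span S'_def by (intro exI[of _ F']) auto
  next
    case False
    have "right_ideal (K \<inter> S')" using ri_Int Kr S'r by blast
    moreover have "I \<subseteq> K \<inter> S'" using IK IS' by blast
    ultimately have KS: "K \<inter> S' = I"
    proof -
      assume r: "right_ideal (K \<inter> S')" and i: "I \<subseteq> K \<inter> S'"
      show ?thesis
      proof (rule ccontr)
        assume "K \<inter> S' \<noteq> I"
        then have "I \<subset> K \<inter> S'" using i by blast
        then have "K \<inter> S' = K" using Kmin r unfolding minimal_over_def by blast
        then show False using False by blast
      qed
    qed
    have KF': "K \<notin> F'" using False S'_def gen_member by blast
    define F'' where "F'' = insert K F'"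
    have g1: "gen_right_ideal (I \<union> \<Union>F'') = ssum S' K"
      unfolding F''_def S'_def using gen_insert[OF I Kr] by blast
    have ind: "\<forall>K'\<in>F''. K' \<inter> gen_right_ideal (I \<union> \<Union>(F'' - {K'})) = I"
    proof
      fix K' assume "K' \<in> F''"
      then consider "K' = K" | "K' \<in> F'" unfolding F''_def by blast
      then show "K' \<inter> gen_right_ideal (I \<union> \<Union>(F'' - {K'})) = I"
      proof cases
        case 1 then show ?thesis using KS KF' unfolding F''_def S'_def by simp
      next
        case 2
        have K'min: "minimal_over I K'" using 2 F' insert by auto
        then have K'r: "right_ideal K'" and IK': "I \<subset> K'" unfolding minimal_over_def by auto
        define T where "T = gen_right_ideal (I \<union> \<Union>(F' - {K'}))"
        have Tr: "right_ideal T" unfolding T_def by (rule gen_ri)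
        have "F'' - {K'} = insert K (F' - {K'})" unfolding F''_def using KF' 2 by auto
        then have eq: "gen_right_ideal (I \<union> \<Union>(F'' - {K'})) = ssum T K"
          unfolding T_def using gen_insert[OF I Kr] by simp
        have TS': "T \<subseteq> S'" unfolding T_def S'_def by (intro gen_mono) auto
        have K'S': "K' \<subseteq> S'" unfolding S'_def using 2 by (rule gen_member)
        have IT: "I \<subseteq> T" unfolding T_def using gen_I[OF I] by blast
        have "K' \<inter> ssum T K \<subseteq> I"
        proof
          fix x assume x: "x \<in> K' \<inter> ssum T K"
          then obtain t k where tk: "x = t + k" "t \<in> T" "k \<in> K" unfolding ssum_def by auto
          have "k = x - t" using tk by simp
          have "x \<in> S'" "t \<in> S'" using x tk(2) TS' K'S' by auto
          then have "x - t \<in> S'" by (rule ri_diff[OF S'r])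
          then have "k \<in> S'" using \<open>k = x - t\<close> by simp
          then have "k \<in> I" using KS tk(3) by blast
          then have "t + k \<in> T" using tk(2) IT ri_add[OF Tr] by blast
          then have "x \<in> T" using tk(1) by simp
          then show "x \<in> I" using x F'(3) 2 T_def by blast
        qed
        moreover have "I \<subseteq> K' \<inter> ssum T K" using IK' IT ssum_sup1[OF Kr] by blast
        ultimately show ?thesis using eq by blast
      qed
    qed
    have sub: "F'' \<subseteq> insert K F" unfolding F''_def using F'(1) by blast
    have "gen_right_ideal (I \<union> \<Union>F'') = gen_right_ideal (I \<union> \<Union>(insert K F))"
      using g1 span by simp
    then show ?thesis using sub ind by (intro exI[of _ F'']) simp
  qed
qed


lemma ri_Union_chain:
  assumes "\<And>I. I \<in> C \<Longrightarrow> right_ideal I" "C \<noteq> {}" "Complete_Partial_Order.chain (\<subseteq>) C"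
  shows "right_ideal (\<Union>C)"
proof (rule riI)
  obtain I where "I \<in> C" using assms(2) by blast
  then show "0 \<in> \<Union>C" using assms(1) ri_0 by blast
next
  fix x y assume "x \<in> \<Union>C" "y \<in> \<Union>C"
  then obtain A B where AB: "A \<in> C" "B \<in> C" "x \<in> A" "y \<in> B" by blast
  have "A \<subseteq> B \<or> B \<subseteq> A" using assms(3) AB unfolding chain_def by blast
  then show "x + y \<in> \<Union>C"
  proof
    assume "A \<subseteq> B" then have "x + y \<in> B" using AB assms(1)[of B] ri_add by blast
    then show ?thesis using AB by blast
  next
    assume "B \<subseteq> A" then have "x + y \<in> A" using AB assms(1)[of A] ri_add by blast
    then show ?thesis using AB by blast
  qed
next
  fix x assume "x \<in> \<Union>C" then obtain A where "A \<in> C" "x \<in> A" by blast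
  then show "- x \<in> \<Union>C" using assms(1)[of A] ri_neg by blast
next
  fix x r assume "x \<in> \<Union>C" then obtain A where "A \<in> C" "x \<in> A" by blast
  then show "x * r \<in> \<Union>C" using assms(1)[of A] ri_mult by blast
qed

lemma socle_ri: "I \<in> socle_seq \<Longrightarrow> right_ideal I"
proof (induction rule: socle_seq.induct)
  case zero then show ?case by (rule ri_zero)
next
  case (succ I) show ?case unfolding soc_succ_def by (rule gen_ri)
next
  case (union C) then show ?case using ri_Union_chain by blast
qed

lemma minD:
  assumes "minimal_over I J"
  shows "right_ideal J" "I \<subset> J" "\<And>J'. right_ideal J' \<Longrightarrow> I \<subset> J' \<Longrightarrow> J' \<subseteq> J \<Longrightarrow> J' = J"
  using assms unfolding minimal_over_def by auto

lemma min0_cases: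
  assumes "minimal_over I J" "right_ideal Y" "I \<subseteq> Y" "Y \<subseteq> J"
  shows "Y = I \<or> Y = J"
  using assms minD[OF assms(1)] by blast

lemma lmult_ri:
  assumes "right_ideal J"
  shows "right_ideal ((\<lambda>s. t * s) ` J)"
proof (rule riI)
  show "0 \<in> (\<lambda>s. t * s) ` J" using ri_0[OF assms] by (metis image_eqI mult_zero_right)
next
  fix x y assume "x \<in> (\<lambda>s. t * s) ` J" "y \<in> (\<lambda>s. t * s) ` J"
  then obtain a b where "x = t * a" "y = t * b" "a \<in> J" "b \<in> J" by blast
  then show "x + y \<in> (\<lambda>s. t * s) ` J" using ri_add[OF assms, of a b]
    by (metis distrib_left image_eqI)
next
  fix x assume "x \<in> (\<lambda>s. t * s) ` J"
  then obtain a where "x = t * a" "a \<in> J" by blast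
  then show "- x \<in> (\<lambda>s. t * s) ` J" using ri_neg[OF assms, of a]
    by (metis mult_minus_right image_eqI)
next
  fix x r assume "x \<in> (\<lambda>s. t * s) ` J"
  then obtain a where "x = t * a" "a \<in> J" by blast
  then show "x * r \<in> (\<lambda>s. t * s) ` J" using ri_mult[OF assms, of a r]
    by (metis mult.assoc image_eqI)
qed

lemma lmult_cases:
  fixes t :: "'a::ring_1"
  assumes J: "minimal_over {0} J"
  shows "(\<lambda>s. t * s) ` J = {0} \<or>
    (minimal_over {0} ((\<lambda>s. t * s) ` J) \<and> rmod_iso {0} J ((\<lambda>s. t * s) ` J) (\<lambda>s. t * s))"
proof -
  have Jr: "right_ideal J" and J0: "{0} \<subset> J" using minD[OF J] by auto
  define Z where "Z = {s \<in> J. t * s = 0}"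
  have Zr: "right_ideal Z"
  proof (rule riI)
    show "0 \<in> Z" unfolding Z_def using ri_0[OF Jr] by simp
    show "x + y \<in> Z" if "x \<in> Z" "y \<in> Z" for x y
      using that ri_add[OF Jr] unfolding Z_def by (simp add: distrib_left)
    show "- x \<in> Z" if "x \<in> Z" for x using that ri_neg[OF Jr] unfolding Z_def by simp
    show "x * r \<in> Z" if "x \<in> Z" for x r using that ri_mult[OF Jr] unfolding Z_def
      by (simp add: mult.assoc[symmetric])
  qed
  have "{0} \<subseteq> Z" using ri_0[OF Zr] by blast
  then have "Z = {0} \<or> Z = J" using min0_cases[OF J Zr] unfolding Z_def by blast
  then show ?thesis
  proof
    assume "Z = J"
    then have "(\<lambda>s. t * s) ` J = {0}" using ri_0[OF Jr] unfolding Z_def by force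
    then show ?thesis by blast
  next
    assume Z0: "Z = {0}"
    let ?T = "(\<lambda>s. t * s) ` J"
    have inj: "s \<in> J \<Longrightarrow> t * s = 0 \<Longrightarrow> s = 0" for s using Z0 unfolding Z_def by blast
    have Tr: "right_ideal ?T" by (rule lmult_ri[OF Jr])
    obtain s where s: "s \<in> J" "s \<noteq> 0" using J0 by blast
    have T0: "{0} \<subset> ?T" using ri_0[OF Tr] s inj by blast
    have "minimal_over {0} ?T" unfolding minimal_over_def
    proof (intro conjI allI impI Tr T0)
      fix Y assume Y: "right_ideal Y \<and> {0} \<subset> Y \<and> Y \<subseteq> ?T"
      define W where "W = {s \<in> J. t * s \<in> Y}"
      have Wr: "right_ideal W"
      proof (rule riI)
        show "0 \<in> W" unfolding W_def using ri_0[OF Jr] ri_0[of Y] Y by simp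
        show "x + y \<in> W" if "x \<in> W" "y \<in> W" for x y
          using that ri_add[OF Jr] ri_add[of Y] Y unfolding W_def by (simp add: distrib_left)
        show "- x \<in> W" if "x \<in> W" for x using that ri_neg[OF Jr] ri_neg[of Y] Y unfolding W_def by simp
        show "x * r \<in> W" if "x \<in> W" for x r using that ri_mult[OF Jr] ri_mult[of Y] Y unfolding W_def
          by (simp add: mult.assoc[symmetric])
      qed
      obtain y where y: "y \<in> Y" "y \<noteq> 0" using Y by blast
      then obtain s where "s \<in> J" "y = t * s" using Y by blast
      then have "s \<in> W" "s \<noteq> 0" using y unfolding W_def by auto
      then have "{0} \<subset> W" using ri_0[OF Wr] by blast
      then have "W = J" using minD(3)[OF J Wr] unfolding W_def by blast
      then show "Y = ?T" using Y unfolding W_def by blast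
    qed
    moreover have "rmod_iso {0} J ?T (\<lambda>s. t * s)"
      unfolding rmod_iso_def rmod_hom_def using inj
      by (auto simp: distrib_left mult.assoc)
    ultimately show ?thesis by blast
  qed
qed


lemma min_transfer:
  assumes I: "right_ideal I" and K: "minimal_over I K" and L: "right_ideal L"
    and LI: "L \<inter> I = {0}" and KL: "K \<subseteq> ssum L I"
  shows "minimal_over {0} (K \<inter> L)"
proof -
  have Kr: "right_ideal K" and IK: "I \<subset> K" using minD[OF K] by auto
  have KLr: "right_ideal (K \<inter> L)" using ri_Int[OF Kr L] .
  obtain k where k: "k \<in> K" "k \<notin> I" using IK by blast
  then obtain l i where li: "k = l + i" "l \<in> L" "i \<in> I" using KL unfolding ssum_def by blast
  have "l = k - i" using li by simp
  moreover have "i \<in> K" using li(3) IK by blast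
  ultimately have "l \<in> K" using ri_diff[OF Kr k(1)] by simp
  moreover have "l \<noteq> 0" using li k by auto
  ultimately have ne: "{0} \<subset> K \<inter> L" using li(2) ri_0[OF KLr] by blast
  show ?thesis unfolding minimal_over_def
  proof (intro conjI KLr ne allI impI)
    fix Y assume Y: "right_ideal Y \<and> {0} \<subset> Y \<and> Y \<subseteq> K \<inter> L"
    have Yr: "right_ideal Y" using Y by (rule conjunct1)
    have S: "right_ideal (ssum Y I)" using ssum_ri[OF Yr I] .
    have "I \<subseteq> ssum Y I" using ssum_sup2[OF Yr] .
    moreover have "Y \<subseteq> K" using Y by auto
    then have "ssum Y I \<subseteq> K" using ssum_least[OF Kr] IK by auto
    moreover have "ssum Y I \<noteq> I"
    proof
      assume eq: "ssum Y I = I"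
      obtain y where "y \<in> Y" "y \<noteq> 0" using Y by blast
      then have "y \<in> I" "y \<in> L" using ssum_sup1[OF I, of Y] eq Y by blast+
      then show False using LI \<open>y \<noteq> 0\<close> by blast
    qed
    ultimately have SK: "ssum Y I = K" using min0_cases[OF K S] by blast
    have "K \<inter> L \<subseteq> Y"
    proof
      fix z assume z: "z \<in> K \<inter> L"
      then obtain y i where yi: "z = y + i" "y \<in> Y" "i \<in> I" using SK unfolding ssum_def by blast
      have "i = z - y" using yi by simp
      moreover have "y \<in> L" using yi Y by blast
      moreover have "z \<in> L" using z by blast
      ultimately have "i \<in> L" using ri_diff[OF L] by simp
      then have "i = 0" using LI yi by blast
      then show "z \<in> Y" using yi by simp
    qed
    then show "Y = K \<inter> L" using Y by blast
  qed
qed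

lemma essential:
  assumes SA: "semiartinian TYPE('a::ring_1)" and L: "right_ideal (L::'a set)"
    and noK: "\<forall>K. minimal_over {0} K \<longrightarrow> \<not> K \<subseteq> L"
  shows "L = {0}"
proof -
  have "I \<in> socle_seq \<Longrightarrow> L \<inter> I = {0}" for I
  proof (induction rule: socle_seq.induct)
    case zero then show ?case using ri_0[OF L] by blast
  next
    case (succ I)
    have Ir: "right_ideal I" using socle_ri[OF succ.hyps] .
    have "x = 0" if x: "x \<in> L" "x \<in> soc_succ I" for x
    proof (rule ccontr)
      assume x0: "x \<noteq> 0"
      obtain G where G: "finite G" "G \<subseteq> {J. minimal_over I J}" "x \<in> gen_right_ideal (I \<union> \<Union>G)"
        using finite_support[OF Ir] x(2) unfolding soc_succ_def by blast
      define U where "U = ssum L I \<inter> gen_right_ideal (I \<union> \<Union>G)"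
      have Ur: "right_ideal U" unfolding U_def using ri_Int[OF ssum_ri[OF L Ir] gen_ri] .
      have "I \<subseteq> U" unfolding U_def using ssum_sup2[OF L] gen_I[OF Ir] by blast
      moreover have "x \<in> U" unfolding U_def using ssum_sup1[OF Ir] x G by blast
      moreover have "x \<notin> I" using x x0 succ.IH by blast
      ultimately have IU: "I \<subset> U" by blast
      have "\<forall>K\<in>G. minimal_over I K" using G by blast
      from contains_minimal[OF Ir G(1) this Ur IU] obtain K where K: "minimal_over I K" "K \<subseteq> U"
        unfolding U_def by blast
      have "minimal_over {0} (K \<inter> L)"
        using min_transfer[OF Ir K(1) L succ.IH] K(2) unfolding U_def by blast
      then show False using noK by blast
    qed
    then show ?case using ri_0[OF L] ri_0[OF socle_ri[OF socle_seq.succ[OF succ.hyps]]] by blast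
  next
    case (union C)
    then show ?case by blast
  qed
  then have "L \<inter> UNIV = {0}" using SA unfolding semiartinian_def by blast
  then show ?thesis by simp
qed


primrec grow :: "('a set set \<Rightarrow> 'a set) \<Rightarrow> nat \<Rightarrow> 'a set set" where
  "grow ch 0 = {}"
| "grow ch (Suc n) = insert (ch (grow ch n)) (grow ch n)"

lemma grow_eq: "grow ch n = (\<lambda>i. ch (grow ch i)) ` {..<n}"
  by (induction n) (auto simp: lessThan_Suc)

lemma idem_gen:
  fixes J :: "'a::ring_1 set"
  assumes reg: "vN_regular TYPE('a)" and J: "minimal_over {0} J"
  shows "\<exists>e\<in>J. e * e = e \<and> e \<noteq> 0 \<and> (\<forall>j\<in>J. e * j = j) \<and> J = range (\<lambda>r. e * r)"
proof -
  have Jr: "right_ideal J" and J0: "{0} \<subset> J" using minD[OF J] by auto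
  obtain x where x: "x \<in> J" "x \<noteq> 0" using J0 by blast
  obtain y where y: "x * y * x = x" using reg unfolding vN_regular_def by blast
  define e where "e = x * y"
  have eJ: "e \<in> J" unfolding e_def using ri_mult[OF Jr x(1)] .
  have ee: "e * e = e" unfolding e_def by (metis y mult.assoc)
  have ex: "e * x = x" unfolding e_def using y by simp
  then have e0: "e \<noteq> 0" using x by auto
  have Er: "right_ideal (range (\<lambda>r. e * r))" using lmult_ri[OF ri_UNIV] by blast
  have "range (\<lambda>r. e * r) \<subseteq> J" using ri_mult[OF Jr eJ] by blast
  moreover have "e \<in> range (\<lambda>r. e * r)" by (metis mult_1_right rangeI)
  then have "{0} \<subset> range (\<lambda>r. e * r)" using e0 ri_0[OF Er] by blast
  ultimately have EJ: "range (\<lambda>r. e * r) = J" using minD(3)[OF J Er] by blast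
  have "\<forall>j\<in>J. e * j = j"
  proof
    fix j assume "j \<in> J"
    then obtain r where "j = e * r" using EJ by blast
    then show "e * j = j" using ee by (simp add: mult.assoc[symmetric])
  qed
  then show ?thesis using eJ ee e0 EJ by blast
qed

lemma max_ri:
  fixes e :: "'a::ring_1"
  assumes J: "minimal_over {0} J" and eJ: "e \<in> J" and e0: "e \<noteq> 0"
  shows "maximal_right_ideal {r. e * r = 0}"
proof -
  have Jr: "right_ideal J" using minD[OF J] by auto
  define M where "M = {r. e * r = 0}"
  have Mr: "right_ideal M" unfolding M_def
    by (rule riI) (auto simp: distrib_left mult.assoc[symmetric])
  have "1 \<notin> M" unfolding M_def using e0 by simp
  then have MU: "M \<noteq> UNIV" by blast
  have "N = M \<or> N = UNIV" if N: "right_ideal N" "M \<subseteq> N" for N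
  proof -
    let ?E = "(\<lambda>n. e * n) ` N"
    have Er: "right_ideal ?E" by (rule lmult_ri[OF N(1)])
    have "?E \<subseteq> J" using ri_mult[OF Jr eJ] by blast
    moreover have "{0} \<subseteq> ?E" using ri_0[OF Er] by blast
    ultimately have "?E = {0} \<or> ?E = J" using min0_cases[OF J Er] by blast
    then show ?thesis
    proof
      assume "?E = {0}"
      then have "N \<subseteq> M" unfolding M_def by blast
      then show ?thesis using N by blast
    next
      assume "?E = J"
      then obtain n where n: "n \<in> N" "e = e * n" using eJ by force
      have "e * (1 - n) = 0" using n by (simp add: right_diff_distrib)
      then have "1 - n \<in> N" using N unfolding M_def by blast
      then have "n + (1 - n) \<in> N" using ri_add[OF N(1) n(1)] by blast
      then have one: "1 \<in> N" by simp
      have "r \<in> N" for r using ri_mult[OF N(1) one, of r] by simp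
      then show ?thesis by blast
    qed
  qed
  then show ?thesis unfolding maximal_right_ideal_def M_def[symmetric] using Mr MU by blast
qed


lemma gen0_sub: "right_ideal K \<Longrightarrow> X \<subseteq> K \<Longrightarrow> gen_right_ideal ({0} \<union> X) \<subseteq> K"
  by (intro gen_least) (auto dest: ri_0)

lemma homog_exists:
  fixes J :: "'a::ring_1 set"
  assumes reg: "vN_regular TYPE('a)" and pfa: "primitive_factors_artinian TYPE('a)"
    and J: "minimal_over {0} J"
  shows "\<exists>n. decomp_length {0} (homog_comp {0} J) n"
proof -
  have Jr: "right_ideal J" using minD[OF J] by auto
  obtain e where e: "e \<in> J" "e * e = e" "e \<noteq> 0" "\<forall>j\<in>J. e * j = j" "J = range (\<lambda>r. e * r)"
    using idem_gen[OF reg J] by blast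
  define M where "M = {r. e * r = (0::'a)}"
  have maxM: "maximal_right_ideal M" unfolding M_def by (rule max_ri[OF J e(1,3)])
  define P where "P = {r. \<forall>x. x * r \<in> M}"
  have "primitive_ideal P" unfolding primitive_ideal_def P_def using maxM by blast
  then have art: "artinian_quot P" using pfa unfolding primitive_factors_artinian_def by blast
  have P_iff: "p \<in> P \<longleftrightarrow> (\<forall>x. e * (x * p) = 0)" for p unfolding P_def M_def by simp
  have Pr: "right_ideal P"
    by (rule riI) (auto simp: P_iff distrib_left distrib_right mult.assoc[symmetric])
  have Pleft: "r * p \<in> P" if "p \<in> P" for r p
    using that unfolding P_iff by (metis mult.assoc)
  have JP: "j * p = 0" if jJ: "j \<in> J" and pP: "p \<in> P" for j p
  proof -
    obtain r where "j = e * r" using jJ e(5) by blast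
    then show ?thesis using pP unfolding P_iff by (simp add: mult.assoc)
  qed
  define \<J> where "\<J> = {J'. minimal_over {0} J' \<and> (\<exists>f. rmod_iso {0} J J' f)}"
  define H where "H = homog_comp {0} J"
  have H_def': "H = gen_right_ideal ({0} \<union> \<Union>\<J>)" unfolding H_def homog_comp_def \<J>_def by simp
  have Hr: "right_ideal H" unfolding H_def' by (rule gen_ri)
  have JH: "K \<subseteq> H" if "K \<in> \<J>" for K unfolding H_def' using that gen_member by blast
  have J'P: "x * p = 0" if a1: "J' \<in> \<J>" and a2: "x \<in> J'" and a3: "p \<in> P" for J' x p
  proof -
    obtain f where f: "rmod_iso {0} J J' f" using a1 unfolding \<J>_def by blast
    obtain y where y: "y \<in> J" "x - f y \<in> {0}" using f a2 unfolding rmod_iso_def by blast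
    have "f (y * p) - f y * p \<in> {0}" using f y(1) unfolding rmod_iso_def rmod_hom_def by blast
    moreover have "f 0 \<in> {0}" using f unfolding rmod_iso_def rmod_hom_def by blast
    moreover have "y * p = 0" using JP y(1) a3 by blast
    ultimately show ?thesis using y(2) by simp
  qed
  define Q where "Q = {h. \<forall>p\<in>P. h * p = 0}"
  have Qr: "right_ideal Q"
  proof (rule riI)
    show "0 \<in> Q" unfolding Q_def by simp
    show "x + y \<in> Q" if "x \<in> Q" "y \<in> Q" for x y using that unfolding Q_def by (simp add: distrib_right)
    show "- x \<in> Q" if "x \<in> Q" for x using that unfolding Q_def by simp
    show "x * r \<in> Q" if "x \<in> Q" for x r using that Pleft unfolding Q_def by (simp add: mult.assoc)
  qed
  have HQ: "H \<subseteq> Q" unfolding H_def' using J'P Qr by (intro gen0_sub) (auto simp: Q_def)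
  have HP: "H \<inter> P = {0}"
  proof -
    have "h = 0" if hH: "h \<in> H" and hP: "h \<in> P" for h
    proof -
      obtain z where z: "h * z * h = h" using reg unfolding vN_regular_def by blast
      have "h * z \<in> H" using ri_mult[OF Hr hH] .
      then have "h * z * h = 0" using HQ hP unfolding Q_def by blast
      then show ?thesis using z by simp
    qed
    then show ?thesis using ri_0[OF Hr] ri_0[OF Pr] by blast
  qed
  have "\<exists>F. finite F \<and> F \<subseteq> \<J> \<and> gen_right_ideal ({0} \<union> \<Union>F) = H"
  proof (rule ccontr)
    assume nofin: "\<not> ?thesis"
    have more: "\<exists>J'\<in>\<J>. \<not> J' \<subseteq> gen_right_ideal ({0} \<union> \<Union>G)" if "finite G" "G \<subseteq> \<J>" for G
    proof (rule ccontr)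
      assume "\<not> ?thesis"
      then have "H \<subseteq> gen_right_ideal ({0} \<union> \<Union>G)" unfolding H_def'
        by (intro gen0_sub[OF gen_ri]) blast
      moreover have "gen_right_ideal ({0} \<union> \<Union>G) \<subseteq> H" unfolding H_def' using that(2)
        by (intro gen_mono) blast
      ultimately show False using nofin that by blast
    qed
    define ch where "ch G = (SOME J'. J' \<in> \<J> \<and> \<not> J' \<subseteq> gen_right_ideal ({0} \<union> \<Union>G))" for G
    define Js where "Js i = ch (grow ch i)" for i
    have gJ: "grow ch n = Js ` {..<n}" for n unfolding Js_def by (rule grow_eq)
    have Jsprop: "Js n \<in> \<J> \<and> \<not> Js n \<subseteq> gen_right_ideal ({0} \<union> \<Union>(Js ` {..<n}))" for n
    proof (induction n rule: less_induct)
      case (less n)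
      have "Js ` {..<n} \<subseteq> \<J>"
      proof
        fix K assume "K \<in> Js ` {..<n}"
        then obtain m where "m < n" "K = Js m" by auto
        then show "K \<in> \<J>" using less.IH[of m] by simp
      qed
      moreover have "finite (Js ` {..<n})" by simp
      ultimately have "\<exists>J'\<in>\<J>. \<not> J' \<subseteq> gen_right_ideal ({0} \<union> \<Union>(Js ` {..<n}))" by (rule more[rotated])
      then have "ch (Js ` {..<n}) \<in> \<J> \<and> \<not> ch (Js ` {..<n}) \<subseteq> gen_right_ideal ({0} \<union> \<Union>(Js ` {..<n}))"
        unfolding ch_def by (rule someI2_bex) blast
      then show ?case unfolding Js_def[of n] gJ[symmetric] unfolding gJ by simp
    qed
    define S where "S n = gen_right_ideal ({0} \<union> \<Union>(Js ` {..<n}))" for n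
    have Jsmin: "minimal_over {0} (Js n)" for n using Jsprop[of n] unfolding \<J>_def by blast
    have Jsr: "right_ideal (Js n)" for n using minD(1)[OF Jsmin] .
    have JsS: "Js n \<inter> S n = {0}" for n
    proof -
      have r: "right_ideal (Js n \<inter> S n)" unfolding S_def using ri_Int[OF Jsr gen_ri] .
      have "{0} \<subseteq> Js n \<inter> S n" using ri_0[OF r] by blast
      then have "Js n \<inter> S n = {0} \<or> Js n \<inter> S n = Js n" using min0_cases[OF Jsmin r] by blast
      then show ?thesis using Jsprop[of n] unfolding S_def by blast
    qed
    have indep: "i < m \<Longrightarrow> Js i \<inter> gen_right_ideal ({0} \<union> \<Union>(Js ` ({..<m} - {i}))) = {0}" for i m
    proof (induction m)
      case 0 then show ?case by simp
    next
      case (Suc m)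
      show ?case
      proof (cases "i = m")
        case True
        then have "{..<Suc m} - {i} = {..<m}" by auto
        then show ?thesis using JsS[of m] True unfolding S_def by simp
      next
        case False
        then have im: "i < m" using Suc.prems by simp
        define T where "T = gen_right_ideal ({0} \<union> \<Union>(Js ` ({..<m} - {i})))"
        have Tr: "right_ideal T" unfolding T_def by (rule gen_ri)
        have "{..<Suc m} - {i} = insert m ({..<m} - {i})" using False by auto
        then have eq: "gen_right_ideal ({0} \<union> \<Union>(Js ` ({..<Suc m} - {i}))) = ssum T (Js m)"
          unfolding T_def using gen_insert[OF ri_zero Jsr[of m], of "Js ` ({..<m} - {i})"] by simp
        have TS: "T \<subseteq> S m" unfolding T_def S_def by (intro gen_mono) auto
        have JiS: "Js i \<subseteq> S m" unfolding S_def using im by (intro gen_member) auto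
        have Smr: "right_ideal (S m)" unfolding S_def by (rule gen_ri)
        have "x = 0" if x: "x \<in> Js i" "x \<in> ssum T (Js m)" for x
        proof -
          obtain t j where tj: "x = t + j" "t \<in> T" "j \<in> Js m" using x(2) unfolding ssum_def by blast
          have "x - t \<in> S m" using ri_diff[OF Smr] x(1) tj(2) JiS TS by blast
          moreover have "x - t = j" using tj by simp
          ultimately have "j \<in> S m" by simp
          then have "j = 0" using JsS[of m] tj(3) by blast
          then have "x \<in> T" using tj by simp
          then show ?thesis using Suc.IH[OF im] x(1) unfolding T_def by blast
        qed
        then show ?thesis using eq ri_0[OF Jsr[of i]] ri_0[OF ssum_ri[OF Tr Jsr[of m]]] by blast
      qed
    qed
    define Tk where "Tk k = gen_right_ideal ({0} \<union> \<Union>(Js ` {k<..}))" for k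
    have JsT: "Js k \<inter> Tk k = {0}" for k
    proof -
      have "x = 0" if x: "x \<in> Js k" "x \<in> Tk k" for x
      proof -
        have x2: "x \<in> gen_right_ideal ({0} \<union> \<Union>(Js ` {k<..}))" using x(2) unfolding Tk_def .
        obtain G where G: "finite G" "G \<subseteq> Js ` {k<..}" "x \<in> gen_right_ideal ({0} \<union> \<Union>G)"
          using finite_support[OF ri_zero x2] by (elim exE conjE)
        obtain N where N: "N \<subseteq> {k<..}" "finite N" "G = Js ` N"
          using finite_subset_image[OF G(1,2)] by (elim exE conjE) (rule that; assumption)
        define m where "m = Suc (Max (insert k N))"
        have km: "k < m" unfolding m_def using N(2) by (simp add: le_imp_less_Suc)
        have "N \<subseteq> {..<m} - {k}" unfolding m_def using N(1,2) by (auto simp: le_imp_less_Suc)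
        then have "G \<subseteq> Js ` ({..<m} - {k})" using N(3) by blast
        then have "x \<in> gen_right_ideal ({0} \<union> \<Union>(Js ` ({..<m} - {k})))"
          using G(3) gen_mono[of "{0} \<union> \<Union>G" "{0} \<union> \<Union>(Js ` ({..<m} - {k}))"] by blast
        then show ?thesis using indep[OF km] x(1) by blast
      qed
      then show ?thesis using ri_0[OF Jsr[of k]] ri_0[OF gen_ri[of "{0} \<union> \<Union>(Js ` {k<..})"]]
        unfolding Tk_def by blast
    qed
    define D where "D k = gen_right_ideal (P \<union> \<Union>(Js ` {k..}))" for k
    have Dr: "right_ideal (D k)" for k unfolding D_def by (rule gen_ri)
    have TkH: "Tk k \<subseteq> H" for k unfolding Tk_def H_def' using Jsprop by (intro gen_mono) blast
    have Dsuc: "D (Suc k) = ssum P (Tk k)" for k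
    proof -
      have "{Suc k..} = {k<..}" by auto
      then have "D (Suc k) = gen_right_ideal (P \<union> ({0} \<union> \<Union>(Js ` {k<..})))"
        unfolding D_def using ri_0[OF Pr] by (simp add: insert_absorb)
      also have "\<dots> = gen_right_ideal (gen_right_ideal ({0} \<union> \<Union>(Js ` {k<..})) \<union> P)"
      proof -
        have "gen_right_ideal (gen_right_ideal ({0} \<union> \<Union>(Js ` {k<..})) \<union> P) =
              gen_right_ideal (({0} \<union> \<Union>(Js ` {k<..})) \<union> P)" by (rule gen_absorb)
        moreover have "({0} \<union> \<Union>(Js ` {k<..})) \<union> P = P \<union> ({0} \<union> \<Union>(Js ` {k<..}))" by (rule Un_commute)
        ultimately show ?thesis by simp
      qed
      also have "\<dots> = ssum (Tk k) P" unfolding Tk_def by (rule gen_Un[OF gen_ri Pr])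
      finally show ?thesis by (simp add: ssum_comm)
    qed
    have "(D (Suc k), D k) \<in> {(A, B). right_ideal A \<and> right_ideal B \<and> P \<subseteq> A \<and> A \<subset> B}" for k
    proof -
      have "P \<subseteq> D (Suc k)" unfolding D_def using gen_sup[of "P \<union> \<Union>(Js ` {Suc k..})"] by auto
      moreover have sub: "D (Suc k) \<subseteq> D k" unfolding D_def by (intro gen_mono) auto
      moreover have "D (Suc k) \<noteq> D k"
      proof
        assume eqD: "D (Suc k) = D k"
        have "Js k \<subseteq> D k" unfolding D_def using gen_sup[of "P \<union> \<Union>(Js ` {k..})"] by auto
        then have "Js k \<subseteq> ssum (Tk k) P" using eqD Dsuc[of k] ssum_comm[of P "Tk k"] by simp
        moreover have "Js k \<subseteq> H" using JH Jsprop[of k] by blast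
        ultimately have "Js k \<subseteq> H \<inter> ssum (Tk k) P" by blast
        also have "\<dots> = ssum (Tk k) (H \<inter> P)"
          by (rule modular[OF _ Hr TkH]) (simp add: Tk_def gen_ri)
        also have "\<dots> = Tk k"
        proof -
          have "{0} \<subseteq> Tk k" unfolding Tk_def using ri_0[OF gen_ri] by blast
          then have "ssum (Tk k) {0} = Tk k" using ssum_eq_left[OF gen_ri ri_zero, of "{0} \<union> \<Union>(Js ` {k<..})"]
            unfolding Tk_def by blast
          then show ?thesis using HP by simp
        qed
        finally have "Js k \<subseteq> Tk k" .
        then have "Js k \<subseteq> {0}" using JsT[of k] by blast
        then show False using minD(2)[OF Jsmin[of k]] by blast
      qed
      ultimately show ?thesis using Dr by blast
    qed
    then have "\<exists>f. \<forall>k. (f (Suc k), f k) \<in> {(A, B). right_ideal A \<and> right_ideal B \<and> P \<subseteq> A \<and> A \<subset> B}"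
      by (intro exI[of _ D]) blast
    then show False using art unfolding artinian_quot_def wf_iff_no_infinite_down_chain by blast
  qed
  then obtain F where F: "finite F" "F \<subseteq> \<J>" "gen_right_ideal ({0} \<union> \<Union>F) = H" by blast
  have Fmin: "\<forall>K\<in>F. minimal_over {0} K" using F(2) unfolding \<J>_def by blast
  obtain F' where F': "F' \<subseteq> F" "gen_right_ideal ({0} \<union> \<Union>F') = gen_right_ideal ({0} \<union> \<Union>F)"
    "\<forall>K\<in>F'. K \<inter> gen_right_ideal ({0} \<union> \<Union>(F' - {K})) = {0}"
    using extract_indep[OF ri_zero F(1) Fmin] by blast
  have "decomp_length {0} H (card F')" unfolding decomp_length_def
    using F' F Fmin finite_subset[OF F'(1) F(1)] by blast
  then show ?thesis unfolding H_def by blast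
qed


lemma iso_id:
  assumes I: "right_ideal I" and IJ: "I \<subseteq> J" shows "rmod_iso I J J id"
proof -
  have "\<forall>y\<in>J. \<exists>x\<in>J. y - x \<in> I"
  proof
    fix y assume "y \<in> J" then show "\<exists>x\<in>J. y - x \<in> I" using ri_0[OF I] by (intro bexI[of _ y]) simp_all
  qed
  then show ?thesis unfolding rmod_iso_def rmod_hom_def using ri_0[OF I] IJ by auto
qed

lemma homog_self:
  fixes J :: "'a::ring_1 set"
  assumes reg: "vN_regular TYPE('a)" and pfa: "primitive_factors_artinian TYPE('a)"
    and lc: "layer_cond ({0}::'a set)" and J: "minimal_over {0} J"
  shows "homog_comp {0} J = J"
proof -
  have Jr: "right_ideal J" and J0: "{0} \<subset> J" using minD[OF J] by auto
  obtain n where n: "decomp_length {0} (homog_comp {0} J) n" using homog_exists[OF reg pfa J] by blast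
  have "dim_n {0} J = n" using dim_n_eq[OF ri_zero n] .
  moreover have "dim_n {0} J = 1" using lc J unfolding layer_cond_def by blast
  ultimately have "decomp_length {0} (homog_comp {0} J) 1" using n by simp
  then obtain F where F: "finite F" "card F = 1" "\<forall>K\<in>F. minimal_over {0} K"
    "gen_right_ideal ({0} \<union> \<Union>F) = homog_comp {0} J" unfolding decomp_length_def by blast
  obtain K where K: "F = {K}" using F(2) card_1_singletonE by blast
  have Kmin: "minimal_over {0} K" using F(3) K by blast
  have Kr: "right_ideal K" using minD(1)[OF Kmin] .
  have "{0} \<union> K = K" using ri_0[OF Kr] by blast
  then have HK: "homog_comp {0} J = K" using F(4) K gen_id[OF Kr] by simp
  have "J \<in> {J'. minimal_over {0} J' \<and> (\<exists>f. rmod_iso {0} J J' f)}"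
    using J iso_id[OF ri_zero] J0 by blast
  then have "J \<subseteq> homog_comp {0} J" unfolding homog_comp_def by (rule gen_member)
  then have "J \<subseteq> K" using HK by simp
  then have "J = K" using minD(3)[OF Kmin Jr J0] by blast
  then show ?thesis using HK by simp
qed

lemma two_sided:
  fixes J :: "'a::ring_1 set"
  assumes hs: "homog_comp {0} J = J" and J: "minimal_over {0} J" and s: "s \<in> J"
  shows "t * s \<in> J"
proof -
  have Jr: "right_ideal J" using minD[OF J] by auto
  from lmult_cases[OF J, of t] show ?thesis
  proof
    assume a: "(\<lambda>s. t * s) ` J = {0}"
    have "t * s \<in> (\<lambda>s. t * s) ` J" using s by (rule imageI)
    then have "t * s = 0" using a by simp
    then show ?thesis using ri_0[OF Jr] by simp
  next
    assume "minimal_over {0} ((\<lambda>s. t * s) ` J) \<and> rmod_iso {0} J ((\<lambda>s. t * s) ` J) (\<lambda>s. t * s)"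
    then have "(\<lambda>s. t * s) ` J \<in> {J'. minimal_over {0} J' \<and> (\<exists>f. rmod_iso {0} J J' f)}" by blast
    then have "(\<lambda>s. t * s) ` J \<subseteq> homog_comp {0} J" unfolding homog_comp_def by (rule gen_member)
    then show ?thesis using hs s by blast
  qed
qed

lemma J_comm:
  fixes J :: "'a::ring_1 set"
  assumes reg: "vN_regular TYPE('a)" and hs: "homog_comp {0} J = J" and J: "minimal_over {0} J"
    and ec: "end_commutative {0} J" and u: "u \<in> J" and v: "v \<in> J"
  shows "u * v = v * u"
proof -
  have Jr: "right_ideal J" using minD[OF J] by auto
  have hom: "rmod_hom {0} J J (\<lambda>x. c * x)" if "c \<in> J" for c
    unfolding rmod_hom_def using two_sided[OF hs J]
    by (auto simp: distrib_left mult.assoc)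
  have "\<forall>x\<in>J. u * (v * x) - v * (u * x) \<in> {0}"
    using ec hom[OF u] hom[OF v] unfolding end_commutative_def by blast
  define w where "w = u * v - v * u"
  have wx: "w * x = 0" if "x \<in> J" for x
    using \<open>\<forall>x\<in>J. _\<close> that unfolding w_def by (simp add: left_diff_distrib mult.assoc)
  have wJ: "w \<in> J" unfolding w_def using ri_diff[OF Jr ri_mult[OF Jr u] ri_mult[OF Jr v]] .
  obtain z where z: "w * z * w = w" using reg unfolding vN_regular_def by blast
  have "z * w \<in> J" using two_sided[OF hs J wJ] .
  then have "w * (z * w) = 0" using wx by blast
  then have "w = 0" using z by (simp add: mult.assoc)
  then show ?thesis unfolding w_def by simp
qed

lemma kill_comm:
  fixes J :: "'a::ring_1 set"
  assumes reg: "vN_regular TYPE('a)" and hs: "homog_comp {0} J = J" and J: "minimal_over {0} J"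
    and ec: "end_commutative {0} J" and s: "s \<in> J"
  shows "(a * b - b * a) * s = 0"
proof -
  obtain e where e: "e \<in> J" "\<forall>j\<in>J. e * j = j" using idem_gen[OF reg J] by blast
  have ae: "a * e \<in> J" and be: "b * e \<in> J" using two_sided[OF hs J e(1)] by auto
  have 1: "(a * e) * (b * e) = a * b * e" using e(2) be by (simp add: mult.assoc)
  have 2: "(b * e) * (a * e) = b * a * e" using e(2) ae by (simp add: mult.assoc)
  have "a * b * e = b * a * e" using J_comm[OF reg hs J ec ae be] 1 2 by simp
  then have "(a * b - b * a) * e = 0" by (simp add: left_diff_distrib)
  moreover have "s = e * s" using e(2) s by simp
  ultimately show ?thesis by (metis mult.assoc mult_zero_left)
qed

lemma comm_from_layer0:
  assumes reg: "vN_regular TYPE('a::ring_1)" and SA: "semiartinian TYPE('a)"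
    and pfa: "primitive_factors_artinian TYPE('a)" and lc: "layer_cond ({0}::'a set)"
  shows "(a::'a) * b = b * a"
proof -
  define L where "L = {r::'a. \<forall>J. minimal_over {0} J \<longrightarrow> (\<forall>s\<in>J. r * s = 0)}"
  have Lr: "right_ideal L"
  proof (rule riI)
    show "0 \<in> L" unfolding L_def by simp
    show "x + y \<in> L" if "x \<in> L" "y \<in> L" for x y using that unfolding L_def by (simp add: distrib_right)
    show "- x \<in> L" if "x \<in> L" for x using that unfolding L_def by simp
    show "x * t \<in> L" if xL: "x \<in> L" for x t
      unfolding L_def
    proof (intro CollectI allI impI ballI)
      fix J :: "'a set" and s assume J: "minimal_over {0} J" and s: "s \<in> J"
      from lmult_cases[OF J, of t] show "x * t * s = 0"
      proof
        assume "(\<lambda>s. t * s) ` J = {0}"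
        then have "t * s = 0" using s by blast
        then show ?thesis by (simp add: mult.assoc)
      next
        assume "minimal_over {0} ((\<lambda>s. t * s) ` J) \<and> rmod_iso {0} J ((\<lambda>s. t * s) ` J) (\<lambda>s. t * s)"
        then have "x * (t * s) = 0" using xL s unfolding L_def by blast
        then show ?thesis by (simp add: mult.assoc)
      qed
    qed
  qed
  have noK: "\<forall>K. minimal_over {0} K \<longrightarrow> \<not> K \<subseteq> L"
  proof (intro allI impI notI)
    fix K assume K: "minimal_over {0} K" and KL: "K \<subseteq> L"
    obtain k where k: "k \<in> K" "k \<noteq> 0" using minD(2)[OF K] by blast
    obtain z where z: "k * z * k = k" using reg unfolding vN_regular_def by blast
    have "k * (z * k) = 0"
    proof (cases "(\<lambda>s. z * s) ` K = {0}")
      case True then have "z * k = 0" using k by blast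
      then show ?thesis by simp
    next
      case False
      then have "minimal_over {0} ((\<lambda>s. z * s) ` K)" using lmult_cases[OF K, of z] by blast
      moreover have "z * k \<in> (\<lambda>s. z * s) ` K" using k by blast
      moreover have "k \<in> L" using KL k by blast
      ultimately show ?thesis unfolding L_def by blast
    qed
    then show False using z k by (simp add: mult.assoc)
  qed
  have "L = {0}" using essential[OF SA Lr noK] .
  moreover have "a * b - b * a \<in> L" unfolding L_def
  proof (intro CollectI allI impI ballI)
    fix J :: "'a set" and s assume J: "minimal_over {0} J" and s: "s \<in> J"
    have hs: "homog_comp {0} J = J" using homog_self[OF reg pfa lc J] .
    have ec: "end_commutative {0} J" using lc J unfolding layer_cond_def by blast
    show "(a * b - b * a) * s = 0" using kill_comm[OF reg hs J ec s] .
  qed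
  ultimately show ?thesis by simp
qed


lemma hom_form:
  fixes f :: "'a::ring_1 \<Rightarrow> 'a"
  assumes I: "right_ideal I" and J: "right_ideal J" and IJ: "I \<subseteq> J" and eJ: "e \<in> J"
    and rep: "\<forall>x\<in>J. \<exists>r. x - e * r \<in> I" and f: "rmod_hom I J J f"
  shows "\<exists>a. \<forall>x r. x \<in> J \<longrightarrow> x - e * r \<in> I \<longrightarrow> f x - e * (a * r) \<in> I"
proof -
  have fJ: "\<forall>x\<in>J. f x \<in> J" and fI: "\<forall>x\<in>I. f x \<in> I"
    and fadd: "\<forall>x\<in>J. \<forall>y\<in>J. f (x + y) - (f x + f y) \<in> I"
    and fmul: "\<forall>x\<in>J. \<forall>r. f (x * r) - f x * r \<in> I" using f unfolding rmod_hom_def by auto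
  obtain a where a: "f e - e * a \<in> I" using rep fJ eJ by blast
  have "f x - e * (a * r) \<in> I" if x: "x \<in> J" and xr: "x - e * r \<in> I" for x r
  proof -
    have er: "e * r \<in> J" using ri_mult[OF J eJ] .
    have d: "x - e * r \<in> J" using IJ xr by blast
    have t1: "f ((x - e * r) + e * r) - (f (x - e * r) + f (e * r)) \<in> I" using fadd d er by blast
    have t2: "f (x - e * r) \<in> I" using fI xr by blast
    have t3: "f (e * r) - f e * r \<in> I" using fmul eJ by blast
    have t4: "(f e - e * a) * r \<in> I" using ri_mult[OF I a] .
    have eq: "f x - e * (a * r) =
      (f ((x - e * r) + e * r) - (f (x - e * r) + f (e * r))) + f (x - e * r)
      + (f (e * r) - f e * r) + (f e - e * a) * r"
      by (simp add: algebra_simps)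
    have mem: "(f ((x - e * r) + e * r) - (f (x - e * r) + f (e * r))) + f (x - e * r)
      + (f (e * r) - f e * r) + (f e - e * a) * r \<in> I" using t1 t2 t3 t4 ri_add[OF I] by blast
    show ?thesis by (subst eq) (rule mem)
  qed
  then show ?thesis by blast
qed

lemma comm_layer:
  fixes I :: "'a::ring_1 set"
  assumes reg: "vN_regular TYPE('a)" and comm: "\<forall>a b::'a. a * b = b * a"
    and I: "right_ideal I"
  shows "layer_cond I"
  unfolding layer_cond_def
proof (intro allI impI conjI)
  fix J assume J: "minimal_over I J"
  have Jr: "right_ideal J" and IJ: "I \<subset> J" using minD[OF J] by auto
  obtain e where e: "e \<in> J" "e \<notin> I" using IJ by blast
  define E where "E = ssum I (range (\<lambda>r. e * r))"
  have Er: "right_ideal E" unfolding E_def using ssum_ri[OF I lmult_ri[OF ri_UNIV]] .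
  have "E \<subseteq> J" unfolding E_def using ssum_least[OF Jr] IJ ri_mult[OF Jr e(1)] by blast
  moreover have "I \<subset> E"
  proof -
    have "I \<subseteq> E" unfolding E_def using ssum_sup1[OF lmult_ri[OF ri_UNIV]] .
    moreover have "e \<in> E" unfolding E_def ssum_def using ri_0[OF I]
      by (intro CollectI exI[of _ 0] exI[of _ e]) (auto intro: range_eqI[of _ _ 1])
    ultimately show ?thesis using e by blast
  qed
  ultimately have EJ: "E = J" using minD(3)[OF J Er] by blast
  have rep: "\<forall>x\<in>J. \<exists>r. x - e * r \<in> I"
  proof
    fix x assume "x \<in> J"
    then obtain i r where "x = i + e * r" "i \<in> I" using EJ unfolding E_def ssum_def by blast
    then show "\<exists>r. x - e * r \<in> I" by (intro exI[of _ r]) simp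
  qed
  show "end_commutative I J" unfolding end_commutative_def
  proof (intro allI impI ballI)
    fix f g x assume f: "rmod_hom I J J f" and g: "rmod_hom I J J g" and x: "x \<in> J"
    obtain a where a: "\<forall>x r. x \<in> J \<longrightarrow> x - e * r \<in> I \<longrightarrow> f x - e * (a * r) \<in> I"
      using hom_form[OF I Jr _ e(1) rep f] IJ by blast
    obtain b where b: "\<forall>x r. x \<in> J \<longrightarrow> x - e * r \<in> I \<longrightarrow> g x - e * (b * r) \<in> I"
      using hom_form[OF I Jr _ e(1) rep g] IJ by blast
    obtain r where r: "x - e * r \<in> I" using rep x by blast
    have gx: "g x \<in> J" "f x \<in> J" using f g x unfolding rmod_hom_def by auto
    have 1: "f (g x) - e * (a * (b * r)) \<in> I" using a gx(1) b x r by (simp add: mult.assoc)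
    have 2: "g (f x) - e * (b * (a * r)) \<in> I" using b gx(2) a x r by (simp add: mult.assoc)
    have "a * (b * r) = b * (a * r)" using comm by (metis mult.assoc)
    then have "f (g x) - g (f x) = (f (g x) - e * (a * (b * r))) - (g (f x) - e * (b * (a * r)))"
      by simp
    then show "f (g x) - g (f x) \<in> I" using ri_diff[OF I 1 2] by simp
  qed
  have sub: "J' \<subseteq> J" if J': "minimal_over I J'" and f: "rmod_iso I J J' f" for J' f
  proof (rule ccontr)
    assume nsub: "\<not> J' \<subseteq> J"
    have J'r: "right_ideal J'" and IJ': "I \<subset> J'" using minD[OF J'] by auto
    have r: "right_ideal (J \<inter> J')" using ri_Int[OF Jr J'r] .
    have "I \<subseteq> J \<inter> J'" using IJ IJ' by blast
    then have "J \<inter> J' = I \<or> J \<inter> J' = J'" using min0_cases[OF J' r] by blast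
    then have JJ': "J \<inter> J' = I" using nsub by blast
    have fh: "rmod_hom I J J' f" and fs: "\<forall>y\<in>J'. \<exists>x\<in>J. y - f x \<in> I" using f unfolding rmod_iso_def by auto
    have "y \<in> I" if y: "y \<in> J'" for y
    proof -
      have jy: "j * y \<in> I" if "j \<in> J" for j
      proof -
        have "j * y \<in> J" using ri_mult[OF Jr that] .
        moreover have "j * y \<in> J'" using ri_mult[OF J'r y, of j] comm by metis
        ultimately show ?thesis using JJ' by blast
      qed
      have xy: "x * y \<in> I" if x: "x \<in> J'" for x
      proof -
        obtain j where j: "j \<in> J" "x - f j \<in> I" using fs x by blast
        have "f (j * y) - f j * y \<in> I" using fh j(1) unfolding rmod_hom_def by blast
        moreover have "f (j * y) \<in> I" using fh jy[OF j(1)] unfolding rmod_hom_def by blast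
        ultimately have "f (j * y) - (f (j * y) - f j * y) \<in> I" using ri_diff[OF I] by blast
        then have "f j * y \<in> I" by simp
        moreover have "(x - f j) * y \<in> I" using ri_mult[OF I j(2)] .
        ultimately have "(x - f j) * y + f j * y \<in> I" using ri_add[OF I] by blast
        then show ?thesis by (simp add: algebra_simps)
      qed
      obtain z where z: "y * z * y = y" using reg unfolding vN_regular_def by blast
      have "y * z * y \<in> I" using xy[OF ri_mult[OF J'r y]] .
      then show ?thesis using z by simp
    qed
    then have "J' \<subseteq> I" by blast
    then show False using IJ' by blast
  qed
  have hc: "homog_comp I J = J"
  proof
    show "homog_comp I J \<subseteq> J" unfolding homog_comp_def
      by (intro gen_least[OF Jr]) (use IJ sub in blast)
    have "J \<in> {J'. minimal_over I J' \<and> (\<exists>f. rmod_iso I J J' f)}" using J iso_id[OF I] IJ by blast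
    then show "J \<subseteq> homog_comp I J" unfolding homog_comp_def by (rule gen_member)
  qed
  have "decomp_length I J 1" unfolding decomp_length_def
  proof (intro exI[of _ "{J}"] conjI)
    have "I \<union> \<Union>{J} = J" using IJ by blast
    then show "gen_right_ideal (I \<union> \<Union>{J}) = J" using gen_id[OF Jr] by simp
    show "\<forall>K\<in>{J}. K \<inter> gen_right_ideal (I \<union> \<Union>({J} - {K})) = I" using gen_id[OF I] IJ by auto
  qed (use J in auto)
  then show "dim_n I J = 1" using dim_n_eq[OF I] hc by simp
qed

theorem main_thm:
  assumes "vN_regular TYPE('a::ring_1)"
    and "semiartinian TYPE('a)"
    and "primitive_factors_artinian TYPE('a)"
  shows "((\<forall>a b::'a. a * b = b * a)
            \<longleftrightarrow> (\<forall>I::'a set. I \<in> socle_seq \<and> I \<noteq> UNIV \<longrightarrow> layer_cond I))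
       \<and> ((\<forall>I::'a set. I \<in> socle_seq \<and> I \<noteq> UNIV \<longrightarrow> layer_cond I)
            \<longleftrightarrow> layer_cond ({0}::'a set))"
proof -
  have CA: "(\<forall>a b::'a. a * b = b * a) \<Longrightarrow> (\<forall>I::'a set. I \<in> socle_seq \<and> I \<noteq> UNIV \<longrightarrow> layer_cond I)"
    using comm_layer[OF assms(1)] socle_ri by blast
  have AB: "(\<forall>I::'a set. I \<in> socle_seq \<and> I \<noteq> UNIV \<longrightarrow> layer_cond I) \<Longrightarrow> layer_cond ({0}::'a set)"
  proof -
    assume A: "\<forall>I::'a set. I \<in> socle_seq \<and> I \<noteq> UNIV \<longrightarrow> layer_cond I"
    show "layer_cond ({0}::'a set)"
    proof (cases "({0}::'a set) = UNIV")
      case True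
      have "\<not> minimal_over {0} (J::'a set)" for J using True minD(2)[of "{0}" J] by blast
      then show ?thesis unfolding layer_cond_def by blast
    next
      case False then show ?thesis using A socle_seq.zero by blast
    qed
  qed
  have BC: "layer_cond ({0}::'a set) \<Longrightarrow> (\<forall>a b::'a. a * b = b * a)"
    using comm_from_layer0[OF assms] by blast
  show ?thesis using CA AB BC by blast
qed


theorem corollary3p6:
  assumes "vN_regular TYPE('a::ring_1)"
    and "semiartinian TYPE('a)"
    and "primitive_factors_artinian TYPE('a)"
  shows "((\<forall>a b::'a. a * b = b * a)
            \<longleftrightarrow> (\<forall>I::'a set. I \<in> socle_seq \<and> I \<noteq> UNIV \<longrightarrow> layer_cond I))
       \<and> ((\<forall>I::'a set. I \<in> socle_seq \<and> I \<noteq> UNIV \<longrightarrow> layer_cond I)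
            \<longleftrightarrow> layer_cond ({0}::'a set))"
  using main_thm[OF assms] .

end
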